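(* Let $P$ be a finite near-simplicial poset of rank $d$ with $f$-vector $(f_{-1},f_0,\dots,f_d)$. Then $$\mathcal{M}_P(z)=g^P_d(z)+\sum_{r=-1}^{d-1}(1-z)^{r+1}f_r.$$
   Context: A ranked poset is a poset with a rank function $|\cdot|$ such that covering relations increase rank by one and minimal elements have rank $-1$; $f_r$ is the number of elements of rank $r$; $P_{\le i}=\{p:|p|\le i\}$. A simplicial poset is a ranked poset in which every closed interval $[p,q]$ ($p\le q$) is isomorphic to a Boolean lattice (the subsets of $\{1,\dots,n\}$ under inclusion) for some $n$. A near-simplicial poset of rank $d$ is a ranked poset $P$ such that $P_{\le d-1}$ is a disjoint union (elements of different components incomparable) of simplicial posets each having a unique minimum element. The Möbius function $\mu$ is $\mu[p,p]=1$, $\mu[p,q]=-\sum_{p\le s<q}\mu[p,s]$ for $p<q$, $0$ if $p\not\le q$; $\mu_z[p,q]=\mu[p,q]z^{|q|-|p|}$; $\mathcal{M}_P(z)=\sum_{p\le q\in P}\mu_z[p,q]$; $g^P_d(z)=\sum_{p\le q,\ |p|\le d\le |q|}\mu_z[p,q]$. *)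

theory Defs
  imports Main
begin

definition partial_order_on' :: "'a set \<Rightarrow> ('a \<Rightarrow> 'a \<Rightarrow> bool) \<Rightarrow> bool" where
  "partial_order_on' P le \<longleftrightarrow>
     (\<forall>p\<in>P. le p p) \<and>
     (\<forall>p\<in>P. \<forall>q\<in>P. le p q \<and> le q p \<longrightarrow> p = q) \<and>
     (\<forall>p\<in>P. \<forall>q\<in>P. \<forall>r\<in>P. le p q \<and> le q r \<longrightarrow> le p r)"

definition covers :: "'a set \<Rightarrow> ('a \<Rightarrow> 'a \<Rightarrow> bool) \<Rightarrow> 'a \<Rightarrow> 'a \<Rightarrow> bool" where
  "covers P le p q \<longleftrightarrow> p \<in> P \<and> q \<in> P \<and> le p q \<and> p \<noteq> q \<and>
     \<not> (\<exists>s\<in>P. le p s \<and> le s q \<and> s \<noteq> p \<and> s \<noteq> q)"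

definition minimal_elem :: "'a set \<Rightarrow> ('a \<Rightarrow> 'a \<Rightarrow> bool) \<Rightarrow> 'a \<Rightarrow> bool" where
  "minimal_elem P le p \<longleftrightarrow> p \<in> P \<and> \<not> (\<exists>s\<in>P. le s p \<and> s \<noteq> p)"

definition ranked_poset :: "'a set \<Rightarrow> ('a \<Rightarrow> 'a \<Rightarrow> bool) \<Rightarrow> ('a \<Rightarrow> int) \<Rightarrow> bool" where
  "ranked_poset P le rk \<longleftrightarrow> partial_order_on' P le \<and>
     (\<forall>p q. covers P le p q \<longrightarrow> rk q = rk p + 1) \<and>
     (\<forall>p. minimal_elem P le p \<longrightarrow> rk p = -1)"

definition ranked_poset_of_rank :: "'a set \<Rightarrow> ('a \<Rightarrow> 'a \<Rightarrow> bool) \<Rightarrow> ('a \<Rightarrow> int) \<Rightarrow> int \<Rightarrow> bool" where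
  "ranked_poset_of_rank P le rk d \<longleftrightarrow> ranked_poset P le rk \<and>
     (\<forall>p\<in>P. rk p \<le> d) \<and> (\<exists>p\<in>P. rk p = d)"

definition interval :: "'a set \<Rightarrow> ('a \<Rightarrow> 'a \<Rightarrow> bool) \<Rightarrow> 'a \<Rightarrow> 'a \<Rightarrow> 'a set" where
  "interval P le p q = {s\<in>P. le p s \<and> le s q}"

definition interval_boolean :: "'a set \<Rightarrow> ('a \<Rightarrow> 'a \<Rightarrow> bool) \<Rightarrow> 'a \<Rightarrow> 'a \<Rightarrow> bool" where
  "interval_boolean P le p q \<longleftrightarrow>
     (\<exists>(n::nat) (f::'a \<Rightarrow> nat set). bij_betw f (interval P le p q) (Pow {1..n}) \<and>
        (\<forall>s\<in>interval P le p q. \<forall>t\<in>interval P le p q. le s t \<longleftrightarrow> f s \<subseteq> f t))"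

definition simplicial_poset :: "'a set \<Rightarrow> ('a \<Rightarrow> 'a \<Rightarrow> bool) \<Rightarrow> ('a \<Rightarrow> int) \<Rightarrow> bool" where
  "simplicial_poset P le rk \<longleftrightarrow> ranked_poset P le rk \<and>
     (\<forall>p\<in>P. \<forall>q\<in>P. le p q \<longrightarrow> interval_boolean P le p q)"

definition has_unique_minimum :: "'a set \<Rightarrow> ('a \<Rightarrow> 'a \<Rightarrow> bool) \<Rightarrow> bool" where
  "has_unique_minimum P le \<longleftrightarrow> (\<exists>!m. m \<in> P \<and> (\<forall>p\<in>P. le m p))"

definition rank_le :: "'a set \<Rightarrow> ('a \<Rightarrow> int) \<Rightarrow> int \<Rightarrow> 'a set" where
  "rank_le P rk i = {p\<in>P. rk p \<le> i}"

definition near_simplicial_poset :: "'a set \<Rightarrow> ('a \<Rightarrow> 'a \<Rightarrow> bool) \<Rightarrow> ('a \<Rightarrow> int) \<Rightarrow> int \<Rightarrow> bool" where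
  "near_simplicial_poset P le rk d \<longleftrightarrow> ranked_poset_of_rank P le rk d \<and>
     (\<exists>\<C>. \<Union>\<C> = rank_le P rk (d - 1) \<and>
          (\<forall>C1\<in>\<C>. \<forall>C2\<in>\<C>. C1 \<noteq> C2 \<longrightarrow> C1 \<inter> C2 = {}) \<and>
          (\<forall>C1\<in>\<C>. \<forall>C2\<in>\<C>. C1 \<noteq> C2 \<longrightarrow>
              (\<forall>x\<in>C1. \<forall>y\<in>C2. \<not> le x y \<and> \<not> le y x)) \<and>
          (\<forall>C\<in>\<C>. simplicial_poset C le rk \<and> has_unique_minimum C le))"

definition mobius :: "'a set \<Rightarrow> ('a \<Rightarrow> 'a \<Rightarrow> bool) \<Rightarrow> 'a \<Rightarrow> 'a \<Rightarrow> int" where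
  "mobius P le = (THE \<mu>. \<forall>p q. \<mu> p q =
      (if p \<in> P \<and> q \<in> P \<and> le p q then
         (if p = q then 1 else - (\<Sum>s\<in>{s\<in>P. le p s \<and> le s q \<and> s \<noteq> q}. \<mu> p s))
       else 0))"

definition mobius_z :: "'a set \<Rightarrow> ('a \<Rightarrow> 'a \<Rightarrow> bool) \<Rightarrow> ('a \<Rightarrow> int) \<Rightarrow> 'b::comm_ring_1 \<Rightarrow> 'a \<Rightarrow> 'a \<Rightarrow> 'b" where
  "mobius_z P le rk z p q = of_int (mobius P le p q) * z ^ nat (rk q - rk p)"

definition M_poly :: "'a set \<Rightarrow> ('a \<Rightarrow> 'a \<Rightarrow> bool) \<Rightarrow> ('a \<Rightarrow> int) \<Rightarrow> 'b::comm_ring_1 \<Rightarrow> 'b" where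
  "M_poly P le rk z = (\<Sum>(p,q)\<in>{(p,q). p \<in> P \<and> q \<in> P \<and> le p q}. mobius_z P le rk z p q)"

definition g_poly :: "'a set \<Rightarrow> ('a \<Rightarrow> 'a \<Rightarrow> bool) \<Rightarrow> ('a \<Rightarrow> int) \<Rightarrow> int \<Rightarrow> 'b::comm_ring_1 \<Rightarrow> 'b" where
  "g_poly P le rk d z = (\<Sum>(p,q)\<in>{(p,q). p \<in> P \<and> q \<in> P \<and> le p q \<and> rk p \<le> d \<and> d \<le> rk q}.
      mobius_z P le rk z p q)"

definition f_num :: "'a set \<Rightarrow> ('a \<Rightarrow> int) \<Rightarrow> int \<Rightarrow> nat" where
  "f_num P rk r = card {p\<in>P. rk p = r}"

end

theory Submission
  imports Defs
begin


function mu_aux :: "'a set \<Rightarrow> ('a \<Rightarrow> 'a \<Rightarrow> bool) \<Rightarrow> 'a \<Rightarrow> 'a \<Rightarrow> int" where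
 "mu_aux P le p q = (if finite P \<and> partial_order_on' P le \<and> p\<in>P \<and> q\<in>P \<and> le p q then
   (if p = q then 1 else - (\<Sum>s\<in>{s\<in>P. le p s \<and> le s q \<and> s\<noteq>q}. mu_aux P le p s)) else 0)"
  by auto
lemma po_facts:
  assumes "partial_order_on' P le"
  shows "\<And>p. p \<in> P \<Longrightarrow> le p p"
    and "\<And>p q. p \<in> P \<Longrightarrow> q \<in> P \<Longrightarrow> le p q \<Longrightarrow> le q p \<Longrightarrow> p = q"
    and "\<And>p q r. p \<in> P \<Longrightarrow> q \<in> P \<Longrightarrow> r \<in> P \<Longrightarrow> le p q \<Longrightarrow> le q r \<Longrightarrow> le p r"
  using assms unfolding partial_order_on'_def by blast+

lemma term_aux:
  assumes h: "finite P \<and> partial_order_on' P le \<and> p\<in>P \<and> q\<in>P \<and> le p q" "p \<noteq> q"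
    and s: "s \<in> {s\<in>P. le p s \<and> le s q \<and> s\<noteq>q}"
  shows "card {t\<in>P. le p t \<and> le t s} < card {t\<in>P. le p t \<and> le t q}"
proof -
  note rf = po_facts(1)[of P le] and an = po_facts(2)[of P le] and tr = po_facts(3)[of P le]
  have sP: "s \<in> P" "le p s" "le s q" "s \<noteq> q" using s by auto
  have "{t\<in>P. le p t \<and> le t s} \<subset> {t\<in>P. le p t \<and> le t q}"
  proof
    show "{t\<in>P. le p t \<and> le t s} \<subseteq> {t\<in>P. le p t \<and> le t q}"
    proof
      fix t assume "t \<in> {t\<in>P. le p t \<and> le t s}"
      then show "t \<in> {t\<in>P. le p t \<and> le t q}" using tr[of t s q] h sP by auto
    qed
    have "\<not> le q s" using an[of s q] h sP by auto
    then have "q \<notin> {t\<in>P. le p t \<and> le t s}" by simp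
    moreover have "q \<in> {t\<in>P. le p t \<and> le t q}" using h rf[of q] by simp
    ultimately show "{t\<in>P. le p t \<and> le t s} \<noteq> {t\<in>P. le p t \<and> le t q}" by blast
  qed
  then show ?thesis
    using h by (intro psubset_card_mono) auto
qed

termination
  by (relation "measure (\<lambda>(P,le,p,q). card {s\<in>P. le p s \<and> le s q})") (auto intro!: term_aux)

declare mu_aux.simps[simp del]

lemma mu_aux_unique:
  assumes R: "\<forall>p q. \<mu> p q =
      (if p \<in> P \<and> q \<in> P \<and> le p q then
         (if p = q then 1 else - (\<Sum>s\<in>{s\<in>P. le p s \<and> le s q \<and> s \<noteq> q}. \<mu> p s))
       else (0::int))"
    and fin: "finite P" and po: "partial_order_on' P le"
  shows "\<mu> p q = mu_aux P le p q"
  using R fin po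
proof (induction P le p q rule: mu_aux.induct)
  case (1 P le p q)
  show ?case
  proof (cases "p \<in> P \<and> q \<in> P \<and> le p q")
    case True
    then show ?thesis
    proof (cases "p = q")
      case True
      then show ?thesis using 1(2)[rule_format, of p q] 1(3,4) \<open>p \<in> P \<and> q \<in> P \<and> le p q\<close>
        by (subst mu_aux.simps) auto
    next
      case False
      have "\<mu> p q = - (\<Sum>s\<in>{s\<in>P. le p s \<and> le s q \<and> s \<noteq> q}. \<mu> p s)"
        using 1(2)[rule_format, of p q] True False by auto
      also have "\<dots> = - (\<Sum>s\<in>{s\<in>P. le p s \<and> le s q \<and> s \<noteq> q}. mu_aux P le p s)"
        using 1(1)[OF _ False _ 1(2) 1(3) 1(4)] 1(3,4) True by (intro arg_cong[where f=uminus] sum.cong) auto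
      also have "\<dots> = mu_aux P le p q"
        using 1(3,4) True False by (subst (2) mu_aux.simps) auto
      finally show ?thesis .
    qed
  next
    case False
    then show ?thesis using 1(2)[rule_format, of p q] by (subst mu_aux.simps) auto
  qed
qed

lemma mobius_unfold:
  assumes fin: "finite P" and po: "partial_order_on' P le"
  shows "mobius P le p q = (if p \<in> P \<and> q \<in> P \<and> le p q then
         (if p = q then 1 else - (\<Sum>s\<in>{s\<in>P. le p s \<and> le s q \<and> s \<noteq> q}. mobius P le p s))
       else 0)"
proof -
  let ?R = "\<lambda>\<mu>. \<forall>p q. \<mu> p q =
      (if p \<in> P \<and> q \<in> P \<and> le p q then
         (if p = q then 1 else - (\<Sum>s\<in>{s\<in>P. le p s \<and> le s q \<and> s \<noteq> q}. \<mu> p s))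
       else (0::int))"
  have ex: "?R (mu_aux P le)"
  proof (intro allI)
    fix p q show "mu_aux P le p q = (if p \<in> P \<and> q \<in> P \<and> le p q then
         (if p = q then 1 else - (\<Sum>s\<in>{s\<in>P. le p s \<and> le s q \<and> s \<noteq> q}. mu_aux P le p s))
       else (0::int))"
      using mu_aux.simps[of P le p q] fin po by simp
  qed
  have un: "\<mu> = mu_aux P le" if "?R \<mu>" for \<mu>
    using mu_aux_unique[OF that fin po] by blast
  have "mobius P le = mu_aux P le"
    unfolding mobius_def
    by (rule the_equality[where P="?R"]) (rule ex, rule un)
  then show ?thesis using ex[rule_format, of p q] by simp
qed



lemma ranked_po: "ranked_poset P le rk \<Longrightarrow> partial_order_on' P le"
  unfolding ranked_poset_def by blast

lemma sub_aux:
  assumes po: "partial_order_on' P le" and "t \<in> P" "s \<in> P" "le t s"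
  shows "{u\<in>P. le p u \<and> le u t} \<subseteq> {u\<in>P. le p u \<and> le u s}"
proof
  fix u assume "u \<in> {u\<in>P. le p u \<and> le u t}"
  then show "u \<in> {u\<in>P. le p u \<and> le u s}" using po_facts(3)[OF po, of u t s] assms by auto
qed

lemma rank_mono:
  assumes fin: "finite P" and rp: "ranked_poset P le rk"
  shows "p \<in> P \<Longrightarrow> q \<in> P \<Longrightarrow> le p q \<Longrightarrow> rk p \<le> rk q"
proof (induction "card {s\<in>P. le p s \<and> le s q}" arbitrary: q rule: less_induct)
  case less
  have po: "partial_order_on' P le" using rp by (rule ranked_po)
  note rf = po_facts(1)[OF po] and an = po_facts(2)[OF po] and tr = po_facts(3)[OF po]
  show ?case
  proof (cases "p = q")
    case True then show ?thesis by simp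
  next
    case False
    let ?S = "{s\<in>P. le p s \<and> le s q \<and> s \<noteq> q}"
    let ?g = "\<lambda>t. card {u\<in>P. le p u \<and> le u t}"
    have finS: "finite ?S" using fin by simp
    have neS: "p \<in> ?S" using less.prems False rf by auto
    obtain t where tS: "t \<in> ?S" and tmax: "\<And>s. s \<in> ?S \<Longrightarrow> ?g s \<le> ?g t"
    proof -
      have "finite (?g ` ?S)" "?g ` ?S \<noteq> {}" using finS neS by auto
      then have "Max (?g ` ?S) \<in> ?g ` ?S" by (rule Max_in)
      then obtain t where "t \<in> ?S" "?g t = Max (?g ` ?S)" by auto
      moreover have "\<And>s. s \<in> ?S \<Longrightarrow> ?g s \<le> Max (?g ` ?S)"
        using finS by (intro Max_ge) auto
      ultimately show ?thesis by (intro that) auto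
    qed
    have tP: "t \<in> P" "le p t" "le t q" "t \<noteq> q" using tS by auto
    have cov: "covers P le t q"
      unfolding covers_def
    proof (intro conjI notI)
      show "t \<in> P" "q \<in> P" "le t q" "t = q \<Longrightarrow> False" using tP less.prems by auto
      assume "\<exists>s\<in>P. le t s \<and> le s q \<and> s \<noteq> t \<and> s \<noteq> q"
      then obtain s where s: "s \<in> P" "le t s" "le s q" "s \<noteq> t" "s \<noteq> q" by blast
      have sS: "s \<in> ?S" using s tP tr[of p t s] less.prems by auto
      have "{u\<in>P. le p u \<and> le u t} \<subset> {u\<in>P. le p u \<and> le u s}"
      proof
        show "{u\<in>P. le p u \<and> le u t} \<subseteq> {u\<in>P. le p u \<and> le u s}"
          using sub_aux[OF po, of t s p] s tP by blast
        have "s \<notin> {u\<in>P. le p u \<and> le u t}" using an[of s t] s tP by auto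
        moreover have "s \<in> {u\<in>P. le p u \<and> le u s}" using sS rf[of s] by auto
        ultimately show "{u\<in>P. le p u \<and> le u t} \<noteq> {u\<in>P. le p u \<and> le u s}" by blast
      qed
      then have "?g t < ?g s" using fin by (intro psubset_card_mono) auto
      with tmax[OF sS] show False by simp
    qed
    then have rq: "rk q = rk t + 1" using rp unfolding ranked_poset_def by simp
    have "{u\<in>P. le p u \<and> le u t} \<subset> {u\<in>P. le p u \<and> le u q}"
    proof
      show "{u\<in>P. le p u \<and> le u t} \<subseteq> {u\<in>P. le p u \<and> le u q}"
        using sub_aux[OF po, of t q p] tP less.prems by blast
      have "q \<notin> {u\<in>P. le p u \<and> le u t}" using an[of t q] tP less.prems by auto
      moreover have "q \<in> {u\<in>P. le p u \<and> le u q}" using less.prems rf[of q] by auto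
      ultimately show "{u\<in>P. le p u \<and> le u t} \<noteq> {u\<in>P. le p u \<and> le u q}" by blast
    qed
    then have "?g t < ?g q" using fin by (intro psubset_card_mono) auto
    then have "rk p \<le> rk t" using less.hyps[of t] tP less.prems by blast
    then show ?thesis using rq by simp
  qed
qed



lemma sum_pow_neg1:
  assumes "finite D" "D \<noteq> {}"
  shows "(\<Sum>U\<in>Pow D. (-1::int) ^ card U) = 0"
proof -
  have "(\<Prod>x\<in>D. (-1::int) + 1) = (\<Sum>X\<in>Pow D. (\<Prod>x\<in>X. -1) * (\<Prod>x\<in>D-X. 1))"
    by (rule prod_add[OF assms(1)])
  then show ?thesis using assms by (simp add: zero_power card_gt_0_iff)
qed

lemma sum_binom_pow:
  fixes z :: "'b::comm_ring_1"
  assumes "finite F"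
  shows "(\<Sum>A\<in>Pow F. (-z) ^ card (F - A)) = (1 - z) ^ card F"
proof -
  have "(\<Prod>x\<in>F. 1 + (-z)) = (\<Sum>X\<in>Pow F. (\<Prod>x\<in>X. 1) * (\<Prod>x\<in>F-X. -z))"
    by (rule prod_add[OF assms(1)])
  then show ?thesis by simp
qed

lemma boolean_lower:
  fixes z :: "'b::comm_ring_1" and f :: "'a \<Rightarrow> nat set"
  assumes fin: "finite P" and rp: "ranked_poset P le rk"
    and mP: "m \<in> P" and mmin: "minimal_elem P le m" and qP: "q \<in> P" and mq: "le m q"
    and low: "\<And>s. s \<in> P \<Longrightarrow> le s q \<Longrightarrow> le m s"
    and bij: "bij_betw f (interval P le m q) (Pow {1..n})"
    and iso: "\<forall>s\<in>interval P le m q. \<forall>t\<in>interval P le m q. le s t \<longleftrightarrow> f s \<subseteq> f t"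
  shows "rk q = int n - 1"
    and "(\<Sum>p\<in>{p\<in>P. le p q}. mobius_z P le rk z p q) = (1 - z) ^ n"
proof -
  define I where "I = interval P le m q"
  have po: "partial_order_on' P le" using rp by (rule ranked_po)
  note rf = po_facts(1)[OF po] and an = po_facts(2)[OF po] and tr = po_facts(3)[OF po]
  have iso': "\<And>s t. s \<in> I \<Longrightarrow> t \<in> I \<Longrightarrow> le s t \<longleftrightarrow> f s \<subseteq> f t"
    using iso unfolding I_def by blast
  have IP: "\<And>s. s \<in> I \<Longrightarrow> s \<in> P" and Im: "\<And>s. s \<in> I \<Longrightarrow> le m s" and Iq: "\<And>s. s \<in> I \<Longrightarrow> le s q"
    unfolding I_def interval_def by auto
  have Iset: "{p\<in>P. le p q} = I"
    unfolding I_def interval_def using low by auto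
  have fI: "\<And>s. s \<in> I \<Longrightarrow> f s \<subseteq> {1..n}"
    using bij_betw_apply[OF bij] unfolding I_def by auto
  have finj: "\<And>s t. s \<in> I \<Longrightarrow> t \<in> I \<Longrightarrow> f s = f t \<Longrightarrow> s = t"
    using bij_betw_imp_inj_on[OF bij] unfolding I_def inj_on_def by blast
  have fsurj: "\<And>T. T \<subseteq> {1..n} \<Longrightarrow> \<exists>t\<in>I. f t = T"
  proof -
    fix T :: "nat set" assume "T \<subseteq> {1..n}"
    then have "T \<in> f ` I" using bij_betw_imp_surj_on[OF bij] unfolding I_def by auto
    then show "\<exists>t\<in>I. f t = T" by auto
  qed
  have mI: "m \<in> I" unfolding I_def interval_def using mP qP mq rf by auto
  have qI: "q \<in> I" unfolding I_def interval_def using mP qP mq rf by auto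
  have Ibetween: "\<And>a b t. a \<in> I \<Longrightarrow> b \<in> I \<Longrightarrow> t \<in> P \<Longrightarrow> le a t \<Longrightarrow> le t b \<Longrightarrow> t \<in> I"
  proof -
    fix a b t assume a: "a \<in> I" and b: "b \<in> I" and t: "t \<in> P" "le a t" "le t b"
    have "le m t" using tr[of m a t] IP[OF a] Im[OF a] mP t by auto
    moreover have "le t q" using tr[of t b q] IP[OF b] Iq[OF b] qP t by auto
    ultimately show "t \<in> I" unfolding I_def interval_def using t by auto
  qed
  have fm: "f m = {}"
  proof -
    obtain t where t: "t \<in> I" "f t = {}" using fsurj[of "{}"] by auto
    have "f m \<subseteq> f t" using iso'[OF mI t(1)] Im[OF t(1)] by simp
    then show ?thesis using t by simp
  qed
  have fq: "f q = {1..n}"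
  proof -
    obtain t where t: "t \<in> I" "f t = {1..n}" using fsurj[of "{1..n}"] by auto
    have "f t \<subseteq> f q" using iso'[OF t(1) qI] Iq[OF t(1)] by simp
    then show ?thesis using t fI[OF qI] by simp
  qed
  have rkm: "rk m = -1" using rp mmin unfolding ranked_poset_def by blast
  have finf: "\<And>s. s \<in> I \<Longrightarrow> finite (f s)" using fI finite_subset by blast
  have rank: "\<And>s. s \<in> I \<Longrightarrow> rk s = int (card (f s)) - 1"
  proof -
    fix s show "s \<in> I \<Longrightarrow> rk s = int (card (f s)) - 1"
    proof (induction "card (f s)" arbitrary: s)
      case 0
      then have "f s = {}" using finf by auto
      then have "s = m" using finj[OF 0(2) mI] fm by simp
      then show ?case using rkm 0 by simp
    next
      case (Suc k)
      obtain x where x: "x \<in> f s" using Suc(2) by (metis card.empty nat.distinct(1) ex_in_conv)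
      obtain t where t: "t \<in> I" "f t = f s - {x}" using fsurj[of "f s - {x}"] fI[OF Suc(3)] by blast
      have ct: "card (f t) = k" using t Suc(2) x finf[OF Suc(3)] by simp
      have "covers P le t s"
        unfolding covers_def
      proof (intro conjI notI)
        show "t \<in> P" "s \<in> P" using IP t(1) Suc(3) by auto
        show "le t s" using iso'[OF t(1) Suc(3)] t by auto
        show "t = s \<Longrightarrow> False" using t x by auto
        assume "\<exists>u\<in>P. le t u \<and> le u s \<and> u \<noteq> t \<and> u \<noteq> s"
        then obtain u where u: "u \<in> P" "le t u" "le u s" "u \<noteq> t" "u \<noteq> s" by blast
        have uI: "u \<in> I" using Ibetween[OF t(1) Suc(3) u(1-3)] .
        have "f t \<subseteq> f u" "f u \<subseteq> f s" using iso'[OF t(1) uI] iso'[OF uI Suc(3)] u by auto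
        then have "f u = f t \<or> f u = f s" using t by blast
        then show False using finj[OF uI t(1)] finj[OF uI Suc(3)] u by blast
      qed
      then have "rk s = rk t + 1" using rp unfolding ranked_poset_def by simp
      moreover have "rk t = int k - 1" using Suc(1)[OF ct[symmetric] t(1)] ct by simp
      ultimately show ?case using Suc(2) by simp
    qed
  qed
  show "rk q = int n - 1" using rank[OF qI] fq by simp
  have mob: "\<And>p s. p \<in> I \<Longrightarrow> s \<in> I \<Longrightarrow> le p s \<Longrightarrow> mobius P le p s = (-1) ^ card (f s - f p)"
  proof -
    fix p s0 show "p \<in> I \<Longrightarrow> s0 \<in> I \<Longrightarrow> le p s0 \<Longrightarrow> mobius P le p s0 = (-1) ^ card (f s0 - f p)"
    proof (induction "card (f s0 - f p)" arbitrary: s0 rule: less_induct)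
      case less
      note pI = less.prems(1) and sI = less.prems(2) and ps = less.prems(3)
      show ?case
      proof (cases "p = s0")
        case True
        then show ?thesis using mobius_unfold[OF fin po, of p s0] IP[OF pI] ps by simp
      next
        case False
        let ?S = "{t\<in>P. le p t \<and> le t s0 \<and> t \<noteq> s0}"
        define D where "D = f s0 - f p"
        have SI: "?S \<subseteq> I" using Ibetween[OF pI sI] by blast
        have fps: "f p \<subseteq> f s0" using iso'[OF pI sI] ps by simp
        have fne: "f p \<noteq> f s0" using finj[OF pI sI] False by blast
        have finD: "finite D" unfolding D_def using finf[OF sI] by simp
        have Dne: "D \<noteq> {}" unfolding D_def using fps fne by blast
        have IH: "\<And>t. t \<in> ?S \<Longrightarrow> mobius P le p t = (-1) ^ card (f t - f p)"
        proof -
          fix t assume tS: "t \<in> ?S"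
          have tI: "t \<in> I" using SI tS by blast
          have "f t \<subseteq> f s0" using iso'[OF tI sI] tS by simp
          moreover have "f t \<noteq> f s0" using finj[OF tI sI] tS by blast
          ultimately have "f t - f p \<subset> f s0 - f p" using iso'[OF pI tI] tS by blast
          then have "card (f t - f p) < card (f s0 - f p)"
            using finf[OF sI] by (intro psubset_card_mono) auto
          then show "mobius P le p t = (-1) ^ card (f t - f p)"
            using less.hyps[of t] pI tI tS by blast
        qed
        have img: "f ` ?S = (\<lambda>U. U \<union> f p) ` (Pow D - {D})"
        proof (rule set_eqI, rule iffI)
          fix T assume "T \<in> f ` ?S"
          then obtain t where tS: "t \<in> ?S" and T: "T = f t" by blast
          have tI: "t \<in> I" using SI tS by blast
          have a: "f p \<subseteq> f t" using iso'[OF pI tI] tS by simp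
          have b: "f t \<subseteq> f s0" using iso'[OF tI sI] tS by simp
          have c: "f t \<noteq> f s0" using finj[OF tI sI] tS by blast
          have "T = (T - f p) \<union> f p" using a T by blast
          moreover have "T - f p \<in> Pow D - {D}" unfolding D_def using a b c T by blast
          ultimately show "T \<in> (\<lambda>U. U \<union> f p) ` (Pow D - {D})" by blast
        next
          fix T assume "T \<in> (\<lambda>U. U \<union> f p) ` (Pow D - {D})"
          then obtain U where U: "U \<subseteq> D" "U \<noteq> D" and T: "T = U \<union> f p" by blast
          have "T \<subseteq> {1..n}" using U T fI[OF sI] fps unfolding D_def by blast
          then obtain t where tI: "t \<in> I" and ft: "f t = T" using fsurj by blast
          have "le p t" using iso'[OF pI tI] ft T by blast
          moreover have "le t s0" using iso'[OF tI sI] ft T U fps unfolding D_def by blast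
          moreover have "t \<noteq> s0" using ft T U fps unfolding D_def by blast
          ultimately have "t \<in> ?S" using IP[OF tI] by blast
          then show "T \<in> f ` ?S" using ft by blast
        qed
        have injS: "inj_on f ?S" using finj SI unfolding inj_on_def by blast
        have injU: "inj_on (\<lambda>U. U \<union> f p) (Pow D - {D})"
          unfolding inj_on_def D_def by blast
        have "mobius P le p s0 = - (\<Sum>t\<in>?S. mobius P le p t)"
          using mobius_unfold[OF fin po, of p s0] IP[OF pI] IP[OF sI] ps False by simp
        also have "(\<Sum>t\<in>?S. mobius P le p t) = (\<Sum>t\<in>?S. (-1) ^ card (f t - f p))"
          using IH by (rule sum.cong[OF refl])
        also have "\<dots> = (\<Sum>T\<in>f ` ?S. (-1) ^ card (T - f p))"
          using sum.reindex[OF injS, of "\<lambda>T. (-1::int) ^ card (T - f p)"] by simp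
        also have "\<dots> = (\<Sum>U\<in>Pow D - {D}. (-1) ^ card ((U \<union> f p) - f p))"
          unfolding img using sum.reindex[OF injU, of "\<lambda>T. (-1::int) ^ card (T - f p)"] by simp
        also have "\<dots> = (\<Sum>U\<in>Pow D - {D}. (-1) ^ card U)"
        proof (rule sum.cong[OF refl])
          fix U assume "U \<in> Pow D - {D}"
          then have "(U \<union> f p) - f p = U" unfolding D_def by blast
          then show "(-1::int) ^ card ((U \<union> f p) - f p) = (-1) ^ card U" by simp
        qed
        also have "\<dots> = (\<Sum>U\<in>Pow D. (-1) ^ card U) - (-1) ^ card D"
          using finD by (simp add: sum_diff1)
        also have "\<dots> = - ((-1) ^ card D)" using sum_pow_neg1[OF finD Dne] by simp
        finally show ?thesis unfolding D_def by simp
      qed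
    qed
  qed
  define F where "F = {1..n::nat}"
  have finF: "finite F" unfolding F_def by simp
  have termeq: "\<And>p. p \<in> I \<Longrightarrow> mobius_z P le rk z p q = (- z) ^ card (F - f p)"
  proof -
    fix p assume pI: "p \<in> I"
    have sub: "f p \<subseteq> F" using fI[OF pI] unfolding F_def .
    have cF: "card (F - f p) = card F - card (f p)" using card_Diff_subset[OF finite_subset[OF sub finF] sub] .
    have le: "card (f p) \<le> card F" using card_mono[OF finF sub] .
    have "nat (rk q - rk p) = card (F - f p)"
      using rank[OF qI] rank[OF pI] fq cF le unfolding F_def by simp
    moreover have "mobius P le p q = (-1) ^ card (F - f p)"
      using mob[OF pI qI Iq[OF pI]] fq unfolding F_def by simp
    ultimately show "mobius_z P le rk z p q = (- z) ^ card (F - f p)"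
      unfolding mobius_z_def by (simp add: power_mult_distrib[symmetric])
  qed
  have injI: "inj_on f I" using finj unfolding inj_on_def by blast
  have fimg: "f ` I = Pow F" using bij_betw_imp_surj_on[OF bij] unfolding I_def F_def .
  have "(\<Sum>p\<in>{p\<in>P. le p q}. mobius_z P le rk z p q) = (\<Sum>p\<in>I. (- z) ^ card (F - f p))"
    unfolding Iset using termeq by (rule sum.cong[OF refl])
  also have "\<dots> = (\<Sum>A\<in>f ` I. (- z) ^ card (F - A))"
    using sum.reindex[OF injI, of "\<lambda>A. (- z) ^ card (F - A)"] by simp
  also have "\<dots> = (1 - z) ^ card F" unfolding fimg by (rule sum_binom_pow[OF finF])
  finally show "(\<Sum>p\<in>{p\<in>P. le p q}. mobius_z P le rk z p q) = (1 - z) ^ n"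
    unfolding F_def by simp
qed



theorem mainTheorem14:
  fixes P :: "'a set" and le :: "'a \<Rightarrow> 'a \<Rightarrow> bool" and rk :: "'a \<Rightarrow> int"
    and d :: int and z :: "'b::comm_ring_1"
  assumes "finite P"
    and "near_simplicial_poset P le rk d"
  shows "M_poly P le rk z =
           g_poly P le rk d z + (\<Sum>r\<in>{-1..d-1}. (1 - z) ^ nat (r + 1) * of_nat (f_num P rk r))"
proof -
  note fin = assms(1)
  obtain \<C> where rpr: "ranked_poset_of_rank P le rk d"
    and CU: "\<Union>\<C> = rank_le P rk (d - 1)"
    and Cdis: "\<forall>C1\<in>\<C>. \<forall>C2\<in>\<C>. C1 \<noteq> C2 \<longrightarrow> C1 \<inter> C2 = {}"
    and Cinc: "\<forall>C1\<in>\<C>. \<forall>C2\<in>\<C>. C1 \<noteq> C2 \<longrightarrow> (\<forall>x\<in>C1. \<forall>y\<in>C2. \<not> le x y \<and> \<not> le y x)"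
    and Cs: "\<forall>C\<in>\<C>. simplicial_poset C le rk \<and> has_unique_minimum C le"
    using assms(2) unfolding near_simplicial_poset_def by (elim exE conjE) (rule that; assumption)
  have rp: "ranked_poset P le rk" and hrk: "\<And>p. p \<in> P \<Longrightarrow> rk p \<le> d"
    using rpr unfolding ranked_poset_of_rank_def by auto
  have po: "partial_order_on' P le" using rp by (rule ranked_po)
  note rf = po_facts(1)[OF po] and an = po_facts(2)[OF po] and tr = po_facts(3)[OF po]
  define Q where "Q = {p\<in>P. rk p \<le> d - 1}"
  have QU: "\<Union>\<C> = Q" using CU unfolding Q_def rank_le_def .
  have QP: "Q \<subseteq> P" unfolding Q_def by auto
  have key: "\<And>q. q \<in> Q \<Longrightarrow> rk q \<ge> -1 \<and>
      (\<Sum>p\<in>{p\<in>P. le p q}. mobius_z P le rk z p q) = (1 - z) ^ nat (rk q + 1)"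
  proof -
    fix q assume qQ: "q \<in> Q"
    have "q \<in> \<Union>\<C>" using qQ QU by simp
    then obtain C where CC: "C \<in> \<C>" and qC: "q \<in> C" by (rule UnionE)
    have "C \<subseteq> \<Union>\<C>" using CC by (rule Union_upper)
    then have CQ: "C \<subseteq> Q" using QU by simp
    have sp: "simplicial_poset C le rk" and hum: "has_unique_minimum C le" using Cs CC by auto
    have "\<exists>m. m \<in> C \<and> (\<forall>p\<in>C. le m p)"
      using hum unfolding has_unique_minimum_def by (rule ex1_implies_ex)
    then obtain m where mC: "m \<in> C" and mmin1: "\<forall>p\<in>C. le m p" by (elim exE conjE)
    have mmin0: "\<And>p. p \<in> C \<Longrightarrow> le m p" using mmin1 by simp
    have sameC: "\<And>x y. x \<in> Q \<Longrightarrow> y \<in> C \<Longrightarrow> le x y \<Longrightarrow> x \<in> C"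
    proof -
      fix x y assume x: "x \<in> Q" and y: "y \<in> C" and xy: "le x y"
      have "x \<in> \<Union>\<C>" using x QU by simp
      then obtain C' where C': "C' \<in> \<C>" "x \<in> C'" by (rule UnionE)
      show "x \<in> C"
      proof (cases "C' = C")
        case True then show ?thesis using C' by simp
      next
        case False
        then have "\<not> le x y" using Cinc[rule_format, OF C'(1) CC False C'(2) y] by simp
        then show ?thesis using xy by simp
      qed
    qed
    have belowC: "\<And>s y. s \<in> P \<Longrightarrow> y \<in> C \<Longrightarrow> le s y \<Longrightarrow> s \<in> C"
    proof -
      fix s y assume s: "s \<in> P" and y: "y \<in> C" and sy: "le s y"
      have yP: "y \<in> P" "rk y \<le> d - 1" using y CQ unfolding Q_def by auto
      have "rk s \<le> rk y" using rank_mono[OF fin rp s yP(1) sy] .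
      then have "s \<in> Q" using s yP unfolding Q_def by simp
      then show "s \<in> C" using sameC y sy by blast
    qed
    have mP: "m \<in> P" and qP: "q \<in> P" using mC qC CQ QP by auto
    have mq: "le m q" using mmin0 qC .
    have low: "\<And>s. s \<in> P \<Longrightarrow> le s q \<Longrightarrow> le m s" using belowC qC mmin0 by blast
    have mmin: "minimal_elem P le m"
      unfolding minimal_elem_def
    proof (intro conjI notI)
      show "m \<in> P" by (rule mP)
      assume "\<exists>s\<in>P. le s m \<and> s \<noteq> m"
      then obtain s where s: "s \<in> P" "le s m" "s \<noteq> m" by blast
      have "s \<in> C" using belowC[OF s(1) mC s(2)] .
      then have "le m s" using mmin0 by blast
      then show False using an[OF s(1) mP s(2)] s(3) by blast
    qed
    have "interval_boolean C le m q"
      using sp mC qC mq unfolding simplicial_poset_def by simp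
    then obtain n and f :: "'a \<Rightarrow> nat set" where
      bij: "bij_betw f (interval C le m q) (Pow {1..n})"
      and iso: "\<forall>s\<in>interval C le m q. \<forall>t\<in>interval C le m q. le s t \<longleftrightarrow> f s \<subseteq> f t"
      unfolding interval_boolean_def by (elim exE conjE) (rule that; assumption)
    have ieq: "interval C le m q = interval P le m q"
    proof
      show "interval C le m q \<subseteq> interval P le m q"
        using CQ QP unfolding interval_def by blast
      show "interval P le m q \<subseteq> interval C le m q"
        using belowC[OF _ qC] unfolding interval_def by blast
    qed
    note bl = boolean_lower[OF fin rp mP mmin qP mq low bij[unfolded ieq] iso[unfolded ieq]]
    show "rk q \<ge> -1 \<and>
      (\<Sum>p\<in>{p\<in>P. le p q}. mobius_z P le rk z p q) = (1 - z) ^ nat (rk q + 1)"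
      using bl by simp
  qed
  define Pairs where "Pairs = {(p,q). p \<in> P \<and> q \<in> P \<and> le p q}"
  define G where "G = {(p,q). p \<in> P \<and> q \<in> P \<and> le p q \<and> rk p \<le> d \<and> d \<le> rk q}"
  define R where "R = {(p,q). p \<in> P \<and> q \<in> P \<and> le p q \<and> rk q \<le> d - 1}"
  have finPairs: "finite Pairs"
    by (rule finite_subset[of _ "P \<times> P"]) (auto simp: Pairs_def fin)
  have PGR: "Pairs = G \<union> R" unfolding Pairs_def G_def R_def using hrk by auto
  have GR: "G \<inter> R = {}" unfolding G_def R_def by auto
  have finG: "finite G" and finR: "finite R" using finPairs PGR by auto
  let ?h = "\<lambda>(p,q). mobius_z P le rk z p q"
  have M: "M_poly P le rk z = sum ?h G + sum ?h R"
    unfolding M_poly_def Pairs_def[symmetric] PGR using sum.union_disjoint[OF finG finR GR] by simp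
  have g: "g_poly P le rk d z = sum ?h G" unfolding g_poly_def G_def by simp
  have "sum ?h R = (\<Sum>(q,p)\<in>Sigma Q (\<lambda>q. {p\<in>P. le p q}). mobius_z P le rk z p q)"
    by (rule sum.reindex_bij_witness[where i="\<lambda>(q,p). (p,q)" and j="\<lambda>(p,q). (q,p)"])
       (auto simp: R_def Q_def)
  also have "\<dots> = (\<Sum>q\<in>Q. \<Sum>p\<in>{p\<in>P. le p q}. mobius_z P le rk z p q)"
    by (rule sum.Sigma[symmetric]) (auto simp: Q_def fin)
  also have "\<dots> = (\<Sum>q\<in>Q. (1 - z) ^ nat (rk q + 1))"
    using key by (intro sum.cong) auto
  also have "\<dots> = (\<Sum>r\<in>{-1..d-1}. \<Sum>x\<in>{x\<in>Q. rk x = r}. (1 - z) ^ nat (rk x + 1))"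
    by (rule sum.group[symmetric]) (use key in \<open>auto simp: Q_def fin\<close>)
  also have "\<dots> = (\<Sum>r\<in>{-1..d-1}. (1 - z) ^ nat (r + 1) * of_nat (f_num P rk r))"
  proof (rule sum.cong[OF refl])
    fix r assume r: "r \<in> {-1..d-1}"
    have "{x\<in>Q. rk x = r} = {p\<in>P. rk p = r}" using r unfolding Q_def by auto
    then have "(\<Sum>x\<in>{x\<in>Q. rk x = r}. (1 - z) ^ nat (rk x + 1)) = (\<Sum>x\<in>{p\<in>P. rk p = r}. (1 - z) ^ nat (r + 1))"
      by (intro sum.cong) auto
    also have "\<dots> = (1 - z) ^ nat (r + 1) * of_nat (f_num P rk r)"
      unfolding f_num_def by (simp add: mult.commute)
    finally show "(\<Sum>x\<in>{x\<in>Q. rk x = r}. (1 - z) ^ nat (rk x + 1)) = (1 - z) ^ nat (r + 1) * of_nat (f_num P rk r)" .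
  qed
  finally show ?thesis using M g by simp
qed


end
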